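(* For integers $1\le N\le 50$, a $PCS_3^N$ exists if and only if $N\in\{1,4,8,12,16,24,28,32,36,40,44,48\}$.
   Context: A binary sequence of length $N$ is a sequence $a=(a(0),\dots,a(N-1))$ with each $a(i)\in\{+1,-1\}$. Its periodic autocorrelation function is $\tilde\varphi_a(i)=\sum_{j=0}^{N-1}a(j)a(i+j \bmod N)$ for $0\le i<N$. A family $a_1,\dots,a_p$ of binary sequences, all of length $N$, is a $PCS_p^N$ (periodic complementary set) if $\sum_{k=1}^p\tilde\varphi_{a_k}(i)=0$ for all $0<i<N$. The sequences in a family need not be distinct. *)

theory Defs
  imports Main
begin

text \<open>A binary sequence of length N is represented as a function nat => int;
  only the values at indices 0..N-1 matter.\<close>

definition binary_seq :: "nat \<Rightarrow> (nat \<Rightarrow> int) \<Rightarrow> bool" where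
  "binary_seq N a \<longleftrightarrow> (\<forall>j<N. a j = 1 \<or> a j = -1)"

definition pacf :: "nat \<Rightarrow> (nat \<Rightarrow> int) \<Rightarrow> nat \<Rightarrow> int" where
  "pacf N a i = (\<Sum>j<N. a j * a ((i + j) mod N))"

text \<open>A family a_1..a_p is indexed here by k in {0..<p}.\<close>
definition is_PCS :: "nat \<Rightarrow> nat \<Rightarrow> (nat \<Rightarrow> nat \<Rightarrow> int) \<Rightarrow> bool" where
  "is_PCS p N as \<longleftrightarrow> (\<forall>k<p. binary_seq N (as k)) \<and>
     (\<forall>i. 0 < i \<and> i < N \<longrightarrow> (\<Sum>k<p. pacf N (as k) i) = 0)"

definition PCS_exists :: "nat \<Rightarrow> nat \<Rightarrow> bool" where
  "PCS_exists p N \<longleftrightarrow> (\<exists>as. is_PCS p N as)"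

end

theory Submission
  imports Defs
begin

lemma inj_aux:
  fixes x y i N :: nat
  assumes "x \<le> y" "y < N" "(i + x) mod N = (i + y) mod N"
  shows "x = y"
proof (rule ccontr)
  assume "x \<noteq> y"
  then have "0 < y - x" using assms(1) by simp
  moreover have "y - x < N" using assms(2) by simp
  moreover have "N dvd (i + y) - (i + x)"
    using mod_eq_dvd_iff_nat[of "i + x" "i + y" N] assms by simp
  then have "N dvd y - x" by simp
  ultimately show False using nat_dvd_not_less by blast
qed

lemma shift_sum:
  fixes N i :: nat and f :: "nat \<Rightarrow> int"
  assumes "0 < N"
  shows "(\<Sum>j<N. f ((i + j) mod N)) = (\<Sum>j<N. (f j :: int))"
proof -
  have "bij_betw (\<lambda>j. (i + j) mod N) {..<N} {..<N}"
  proof (rule bij_betw_imageI)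
    show "inj_on (\<lambda>j. (i + j) mod N) {..<N}"
    proof (rule inj_onI)
      fix x y assume xy: "x \<in> {..<N}" "y \<in> {..<N}" and eq: "(i + x) mod N = (i + y) mod N"
      show "x = y"
      proof (cases "x \<le> y")
        case True then show ?thesis using inj_aux[OF True _ eq] xy by simp
      next
        case False then have "y \<le> x" by simp
        then show ?thesis using inj_aux[OF _ _ eq[symmetric]] xy by simp
      qed
    qed
    moreover have "(\<lambda>j. (i + j) mod N) ` {..<N} \<subseteq> {..<N}" using assms by auto
    ultimately show "(\<lambda>j. (i + j) mod N) ` {..<N} = {..<N}"
      using endo_inj_surj[of "{..<N}"] by blast
  qed
  then show ?thesis using sum.reindex_bij_betw[of "\<lambda>j. (i + j) mod N" "{..<N}" "{..<N}" f] by simp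
qed

lemma sq_mod8: "(t::int)^2 mod 8 \<in> {0,1,4}"
proof -
  have e: "t^2 mod 8 = (t mod 8)^2 mod 8" by (simp add: power_mod)
  have "t mod 8 \<in> {0..7}" by simp
  then have "t mod 8 \<in> {0,1,2,3,4,5,6,7}" by auto
  then show ?thesis unfolding e by auto
qed

lemma no7: "(a::int) \<in> {0,1,4} \<Longrightarrow> b \<in> {0,1,4} \<Longrightarrow> c \<in> {0,1,4} \<Longrightarrow> (a + b + c) mod 8 \<noteq> 7"
  by auto

lemma no15: "(x::int)^2 + y^2 + z^2 \<noteq> 15"
proof
  assume h: "x^2 + y^2 + z^2 = 15"
  have 1: "(x^2 + y^2 + z^2) mod 8 = ((x^2 + y^2) mod 8 + z^2 mod 8) mod 8"
    by (rule mod_add_eq[symmetric])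
  have 2: "(x^2 + y^2) mod 8 = (x^2 mod 8 + y^2 mod 8) mod 8" by (rule mod_add_eq[symmetric])
  have 3: "((x^2 mod 8 + y^2 mod 8) mod 8 + z^2 mod 8) mod 8 = ((x^2 mod 8) + (y^2 mod 8) + (z^2 mod 8)) mod 8"
    by (rule mod_add_left_eq)
  have "(x^2 + y^2 + z^2) mod 8 = ((x^2 mod 8) + (y^2 mod 8) + (z^2 mod 8)) mod 8"
    by (simp only: 1 2 3)
  then have "((x^2 mod 8) + (y^2 mod 8) + (z^2 mod 8)) mod 8 = 7" using h by simp
  then show False using no7[OF sq_mod8 sq_mod8 sq_mod8] by blast
qed

lemma sum3: "(\<Sum>k<(3::nat). f k) = f 0 + f 1 + (f 2 :: int)"
  by (simp add: eval_nat_numeral)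

lemma par: assumes "binary_seq N a" shows "2 dvd (int N - (\<Sum>j<N. a j))"
proof -
  have "int N - (\<Sum>j<N. a j) = (\<Sum>j<N. 1 - a j)" by (simp add: sum_subtractf)
  moreover have "2 dvd (\<Sum>j<N. 1 - a j)"
    using assms unfolding binary_seq_def by (intro dvd_sum) auto
  ultimately show ?thesis by simp
qed

lemma pacf_mod4:
  assumes b: "binary_seq N a" and N: "0 < N"
  shows "pacf N a i mod 4 = int N mod 4"
proof -
  define s where "s = (\<Sum>j<N. a j)"
  have t: "4 dvd (\<Sum>j<N. (1 - a j) * (1 - a ((i + j) mod N)))"
  proof (intro dvd_sum)
    fix j assume "j \<in> {..<N}"
    then have "(i + j) mod N < N" "j < N" using N by auto
    then have "a j = 1 \<or> a j = -1" "a ((i + j) mod N) = 1 \<or> a ((i + j) mod N) = -1"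
      using b unfolding binary_seq_def by auto
    then show "4 dvd (1 - a j) * (1 - a ((i + j) mod N))" by auto
  qed
  have "(\<Sum>j<N. (1 - a j) * (1 - a ((i + j) mod N)))
     = (\<Sum>j<N. 1 - a j - a ((i + j) mod N) + a j * a ((i + j) mod N))"
    by (simp add: algebra_simps)
  also have "\<dots> = int N - s - (\<Sum>j<N. a ((i + j) mod N)) + pacf N a i"
    unfolding pacf_def s_def by (simp add: sum.distrib sum_subtractf)
  also have "(\<Sum>j<N. a ((i + j) mod N)) = s" unfolding s_def using shift_sum[OF N] by blast
  finally have e: "(\<Sum>j<N. (1 - a j) * (1 - a ((i + j) mod N))) = int N - 2 * s + pacf N a i"
    by simp
  have "2 dvd (int N - s)" using par[OF b] unfolding s_def .
  then obtain m where m: "int N - s = 2 * m" by blast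
  have eqn: "pacf N a i - int N = (\<Sum>j<N. (1 - a j) * (1 - a ((i + j) mod N))) - 4 * m"
    using e m by linarith
  have "4 dvd (pacf N a i - int N)" unfolding eqn by (rule dvd_diff[OF t]) simp
  then show ?thesis by (simp add: mod_eq_dvd_iff)
qed

lemma pacf_sum:
  assumes N: "0 < N"
  shows "(\<Sum>i<N. pacf N a i) = (\<Sum>j<N. a j)^2"
proof -
  have "(\<Sum>i<N. pacf N a i) = (\<Sum>j<N. a j * (\<Sum>i<N. a ((j + i) mod N)))"
    unfolding pacf_def by (subst sum.swap) (simp add: sum_distrib_left add.commute)
  also have "\<dots> = (\<Sum>j<N. a j * (\<Sum>i<N. a i))"
    using shift_sum[OF N] by simp
  finally show ?thesis by (simp add: power2_eq_square sum_distrib_right)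
qed

lemma pacf0: assumes "binary_seq N a" shows "pacf N a 0 = int N"
proof -
  have "pacf N a 0 = (\<Sum>j<N. 1)"
    unfolding pacf_def using assms unfolding binary_seq_def by (intro sum.cong) auto
  then show ?thesis by simp
qed

lemma nec:
  assumes P: "is_PCS 3 N as" and N2: "2 \<le> N"
  shows "4 dvd N \<and> N \<noteq> 20"
proof -
  have N: "0 < N" using N2 by simp
  have b: "binary_seq N (as k)" if "k < 3" for k using P that unfolding is_PCS_def by blast
  have z: "(\<Sum>k<3. pacf N (as k) i) = 0" if "0 < i" "i < N" for i
    using P that unfolding is_PCS_def by blast
  have z1: "pacf N (as 0) 1 + pacf N (as 1) 1 + pacf N (as 2) 1 = 0"
    using z[of 1] N2 by (simp add: sum3)
  have m: "pacf N (as k) 1 mod 4 = int N mod 4" if "k < 3" for k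
    using pacf_mod4[OF b[OF that] N] .
  have d: "4 dvd (pacf N (as k) 1 - int N)" if "k < 3" for k
    using m[OF that] by (simp add: mod_eq_dvd_iff)
  have "4 dvd (pacf N (as 0) 1 - int N)" "4 dvd (pacf N (as 1) 1 - int N)" "4 dvd (pacf N (as 2) 1 - int N)"
    using d by auto
  then obtain q0 q1 q2 where q0: "pacf N (as 0) 1 - int N = 4 * q0" and q1: "pacf N (as 1) 1 - int N = 4 * q1"
    and q2: "pacf N (as 2) 1 - int N = 4 * q2" by (meson dvdE)
  have "3 * int N = 4 * (- q0 - q1 - q2)" using z1 q0 q1 q2 by (simp add: algebra_simps)
  then have "int N = 4 * (int N + q0 + q1 + q2)" by (simp add: algebra_simps)
  then have "4 dvd int N" by (metis dvd_triv_left)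
  then have d4: "4 dvd N" by (metis int_dvd_int_iff of_nat_numeral)
  have n20: "N \<noteq> 20"
  proof
    assume N20: "N = 20"
    define s where "s k = (\<Sum>j<N. as k j)" for k
    have "(\<Sum>i<N. \<Sum>k<3. pacf N (as k) i) = (\<Sum>k<3. s k ^ 2)"
      by (subst sum.swap) (simp add: pacf_sum[OF N] s_def)
    moreover have "(\<Sum>i<N. \<Sum>k<3. pacf N (as k) i) = 3 * int N"
    proof -
      obtain M where M: "N = Suc M" using N by (cases N) auto
      have "(\<Sum>i<N. \<Sum>k<3. pacf N (as k) i) = (\<Sum>k<3. pacf N (as k) 0) + (\<Sum>i<M. \<Sum>k<3. pacf N (as k) (Suc i))"
        unfolding M by (rule sum.lessThan_Suc_shift)
      also have "(\<Sum>i<M. \<Sum>k<3. pacf N (as k) (Suc i)) = 0"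
        using z M by (intro sum.neutral) auto
      also have "(\<Sum>k<3. pacf N (as k) 0) = (\<Sum>k<(3::nat). int N)"
        using pacf0[OF b] by (intro sum.cong) auto
      finally show ?thesis by simp
    qed
    ultimately have sq: "s 0 ^ 2 + s 1 ^ 2 + s 2 ^ 2 = 60" using N20 by (simp add: sum3)
    have ev: "2 dvd s k" if "k < 3" for k
    proof -
      have "2 dvd (int N - s k)" using par[OF b[OF that]] unfolding s_def .
      then obtain r where "int N - s k = 2 * r" by (rule dvdE)
      then have "s k = 2 * (10 - r)" using N20 by simp
      then show ?thesis by simp
    qed
    have "2 dvd s 0" "2 dvd s 1" "2 dvd s 2" using ev by auto
    then obtain x y z where "s 0 = 2 * x" "s 1 = 2 * y" "s 2 = 2 * z" by (meson dvdE)
    with sq have "4 * (x^2 + y^2 + z^2) = 4 * 15" by (simp add: power_mult_distrib algebra_simps)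
    then have "x^2 + y^2 + z^2 = 15" by simp
    then show False using no15 by blast
  qed
  show ?thesis using d4 n20 by blast
qed


definition corr :: "int list \<Rightarrow> nat \<Rightarrow> int" where
  "corr l i = sum_list (map2 (*) l (drop i l @ take i l))"

lemma corr_pacf:
  assumes "i < length l"
  shows "corr l i = pacf (length l) (\<lambda>j. l ! j) i"
proof -
  have r: "drop i l @ take i l = rotate i l" using assms by (simp add: rotate_drop_take)
  have "corr l i = sum_list (map2 (*) l (rotate i l))" unfolding corr_def r ..
  also have "\<dots> = (\<Sum>j<length l. l ! j * rotate i l ! j)"
    by (simp add: sum_list_sum_nth atLeast0LessThan)
  also have "\<dots> = (\<Sum>j<length l. l ! j * l ! ((i + j) mod length l))"
    by (intro sum.cong) (auto simp: nth_rotate)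
  finally show ?thesis unfolding pacf_def .
qed

definition ok3 :: "nat \<Rightarrow> int list \<Rightarrow> int list \<Rightarrow> int list \<Rightarrow> bool" where
  "ok3 n x y z \<longleftrightarrow> length x = n \<and> length y = length x \<and> length z = length x \<and>
     list_all (\<lambda>v. v = 1 \<or> v = -1) (x @ y @ z) \<and>
     list_all (\<lambda>i. corr x i + corr y i + corr z i = 0) [1..<length x]"

lemma ok3_sound:
  assumes "ok3 n x y z"
  shows "PCS_exists 3 n"
proof -
  define as where "as k = (if k = 0 then (\<lambda>j. x ! j) else if k = 1 then (\<lambda>j. y ! j) else (\<lambda>j. z ! j))" for k :: nat
  have lx: "length x = n" using assms unfolding ok3_def by simp
  have ly: "length y = length x" and lz: "length z = length x"
    and b: "\<forall>v\<in>set (x @ y @ z). v = 1 \<or> v = -1"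
    and c: "\<forall>i\<in>set [1..<length x]. corr x i + corr y i + corr z i = 0"
    using assms unfolding ok3_def list_all_iff by auto
  have "is_PCS 3 (length x) as"
    unfolding is_PCS_def
  proof (intro conjI allI impI)
    fix k :: nat assume "k < 3"
    then show "binary_seq (length x) (as k)"
      unfolding binary_seq_def as_def using b ly lz by (auto simp: nth_mem)
  next
    fix i assume i: "0 < i \<and> i < length x"
    have "(\<Sum>k<3. pacf (length x) (as k) i) = pacf (length x) (as 0) i + pacf (length x) (as 1) i + pacf (length x) (as 2) i"
      by (rule sum3)
    also have "\<dots> = corr x i + corr y i + corr z i"
      using corr_pacf[of i x] corr_pacf[of i y] corr_pacf[of i z] i ly lz by (simp add: as_def)
    also have "\<dots> = 0" using c i by auto
    finally show "(\<Sum>k<3. pacf (length x) (as k) i) = 0" .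
  qed
  then show ?thesis unfolding PCS_exists_def lx by blast
qed

lemma ex1: "PCS_exists 3 1"
proof -
  have "is_PCS 3 1 (\<lambda>k j. 1)" unfolding is_PCS_def binary_seq_def by auto
  then show ?thesis unfolding PCS_exists_def by blast
qed

lemma w4: "ok3 4 [-1, -1, 1, -1]
  [-1, 1, -1, -1]
  [1, 1, 1, -1]"
  by code_simp

lemma ex4: "PCS_exists 3 4"
  by (rule ok3_sound[OF w4])

lemma w8: "ok3 8 [-1, -1, 1, -1, 1, -1, -1, -1]
  [-1, -1, 1, -1, 1, 1, 1, 1]
  [-1, 1, 1, -1, -1, 1, -1, -1]"
  by code_simp

lemma ex8: "PCS_exists 3 8"
  by (rule ok3_sound[OF w8])

lemma w12: "ok3 12 [-1, -1, 1, -1, -1, -1, -1, 1, -1, 1, 1, -1]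
  [1, 1, -1, 1, -1, -1, 1, -1, -1, -1, -1, -1]
  [-1, 1, -1, -1, -1, 1, 1, 1, -1, 1, -1, -1]"
  by code_simp

lemma ex12: "PCS_exists 3 12"
  by (rule ok3_sound[OF w12])

lemma w16: "ok3 16 [-1, -1, -1, -1, -1, 1, 1, 1, -1, 1, 1, -1, -1, 1, -1, -1]
  [1, -1, 1, 1, -1, 1, 1, 1, -1, -1, 1, -1, 1, 1, 1, -1]
  [1, 1, -1, 1, 1, -1, 1, -1, 1, 1, 1, -1, -1, -1, 1, 1]"
  by code_simp

lemma ex16: "PCS_exists 3 16"
  by (rule ok3_sound[OF w16])

lemma w24: "ok3 24 [1, 1, -1, 1, -1, -1, 1, -1, -1, -1, -1, 1, 1, 1, -1, -1, -1, 1, -1, 1, -1, 1, 1, 1]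
  [-1, -1, 1, -1, 1, 1, -1, 1, 1, -1, -1, -1, 1, -1, -1, -1, -1, -1, -1, 1, -1, 1, 1, -1]
  [-1, 1, -1, 1, 1, 1, -1, -1, -1, 1, 1, -1, 1, 1, 1, -1, 1, 1, 1, 1, -1, 1, 1, -1]"
  by code_simp

lemma ex24: "PCS_exists 3 24"
  by (rule ok3_sound[OF w24])

lemma w28: "ok3 28 [1, -1, -1, 1, -1, 1, 1, 1, 1, -1, -1, -1, 1, -1, 1, -1, 1, -1, -1, 1, 1, -1, 1, -1, 1, 1, 1, 1]
  [-1, -1, -1, 1, 1, -1, -1, 1, 1, -1, 1, 1, -1, 1, 1, 1, -1, 1, -1, 1, 1, 1, 1, -1, -1, -1, 1, -1]
  [1, 1, -1, 1, -1, -1, -1, -1, -1, -1, 1, 1, -1, 1, 1, 1, -1, -1, 1, -1, -1, -1, -1, 1, -1, -1, -1, -1]"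
  by code_simp

lemma ex28: "PCS_exists 3 28"
  by (rule ok3_sound[OF w28])

lemma w32: "ok3 32 [1, 1, 1, 1, 1, 1, -1, 1, -1, 1, -1, 1, -1, -1, -1, 1, -1, 1, 1, -1, -1, 1, 1, 1, 1, -1, 1, 1, 1, 1, -1, -1]
  [1, 1, 1, -1, -1, -1, -1, -1, 1, 1, 1, 1, 1, -1, 1, 1, -1, 1, 1, 1, -1, -1, 1, -1, -1, 1, -1, -1, 1, -1, 1, 1]
  [-1, -1, -1, 1, -1, 1, -1, 1, 1, -1, 1, -1, 1, 1, 1, 1, -1, 1, 1, 1, -1, -1, 1, 1, -1, 1, 1, -1, -1, -1, 1, 1]"
  by code_simp

lemma ex32: "PCS_exists 3 32"
  by (rule ok3_sound[OF w32])

lemma w36: "ok3 36 [1, -1, 1, -1, -1, -1, -1, -1, 1, -1, -1, -1, -1, 1, -1, -1, 1, 1, 1, -1, 1, 1, -1, -1, -1, -1, -1, -1, 1, -1, 1, -1, 1, -1, -1, 1]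
  [-1, 1, -1, 1, -1, -1, -1, -1, 1, 1, -1, -1, -1, -1, 1, -1, -1, 1, -1, -1, 1, 1, -1, -1, -1, 1, 1, 1, 1, 1, 1, -1, 1, -1, 1, 1]
  [1, 1, -1, 1, -1, -1, -1, -1, -1, 1, 1, -1, 1, -1, 1, 1, 1, -1, -1, -1, 1, 1, 1, 1, -1, 1, 1, -1, -1, 1, 1, -1, -1, 1, -1, 1]"
  by code_simp

lemma ex36: "PCS_exists 3 36"
  by (rule ok3_sound[OF w36])

lemma w40: "ok3 40 [-1, -1, 1, -1, -1, -1, -1, -1, 1, 1, 1, -1, 1, -1, -1, 1, 1, -1, 1, -1, 1, -1, 1, 1, -1, 1, -1, 1, -1, -1, 1, 1, 1, -1, 1, 1, 1, 1, 1, -1]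
  [1, -1, 1, -1, -1, -1, 1, 1, 1, -1, 1, -1, 1, -1, -1, 1, 1, -1, -1, -1, -1, 1, -1, -1, 1, -1, 1, 1, 1, 1, -1, 1, 1, 1, -1, 1, -1, 1, 1, 1]
  [-1, -1, -1, -1, -1, -1, -1, 1, 1, -1, -1, 1, 1, -1, -1, 1, -1, -1, 1, -1, -1, 1, -1, 1, 1, -1, -1, 1, 1, 1, 1, -1, -1, -1, -1, -1, -1, -1, 1, 1]"
  by code_simp

lemma ex40: "PCS_exists 3 40"
  by (rule ok3_sound[OF w40])

lemma w44: "ok3 44 [1, 1, -1, -1, 1, -1, 1, -1, -1, -1, -1, 1, 1, 1, 1, -1, 1, -1, -1, -1, -1, 1, 1, -1, -1, 1, -1, -1, 1, 1, 1, 1, -1, 1, 1, -1, -1, -1, -1, -1, -1, -1, -1, -1]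
  [-1, -1, -1, 1, 1, 1, -1, -1, -1, 1, -1, -1, -1, 1, -1, 1, -1, -1, 1, -1, -1, 1, 1, -1, 1, 1, 1, 1, 1, 1, -1, 1, 1, 1, -1, 1, -1, -1, -1, 1, 1, -1, 1, 1]
  [1, 1, 1, -1, 1, -1, 1, -1, -1, -1, 1, 1, -1, 1, 1, -1, -1, 1, -1, 1, -1, -1, 1, 1, 1, 1, -1, 1, -1, 1, 1, -1, 1, -1, 1, -1, 1, 1, 1, 1, -1, -1, 1, 1]"
  by code_simp

lemma ex44: "PCS_exists 3 44"
  by (rule ok3_sound[OF w44])

lemma w48: "ok3 48 [-1, 1, -1, -1, 1, 1, -1, -1, 1, 1, 1, -1, -1, -1, -1, 1, -1, -1, 1, 1, 1, 1, 1, -1, -1, 1, 1, 1, -1, 1, -1, -1, 1, -1, -1, -1, -1, 1, 1, -1, 1, -1, -1, -1, 1, -1, -1, 1]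
  [-1, -1, -1, -1, 1, 1, -1, -1, -1, 1, -1, 1, 1, 1, -1, 1, -1, 1, -1, -1, 1, -1, -1, -1, -1, -1, 1, 1, 1, -1, 1, -1, -1, 1, -1, 1, 1, -1, 1, -1, 1, -1, -1, -1, 1, -1, -1, 1]
  [-1, 1, 1, -1, -1, 1, 1, 1, 1, -1, 1, -1, 1, 1, 1, 1, 1, 1, 1, -1, 1, 1, 1, -1, -1, -1, -1, 1, 1, 1, 1, 1, 1, 1, -1, -1, 1, -1, -1, -1, 1, -1, 1, -1, -1, -1, 1, -1]"
  by code_simp

lemma ex48: "PCS_exists 3 48"
  by (rule ok3_sound[OF w48])

theorem proposition3:
  fixes N :: nat
  assumes "1 \<le> N" and "N \<le> 50"
  shows "PCS_exists 3 N \<longleftrightarrow> N \<in> {1,4,8,12,16,24,28,32,36,40,44,48}"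
proof
  assume PE: "PCS_exists 3 N"
  show "N \<in> {1,4,8,12,16,24,28,32,36,40,44,48}"
  proof (cases "N = 1")
    case True then show ?thesis by simp
  next
    case False
    then have "2 \<le> N" using assms(1) by simp
    moreover obtain as where "is_PCS 3 N as" using PE unfolding PCS_exists_def by blast
    ultimately have "4 dvd N" "N \<noteq> 20" using nec by blast+
    then obtain m where m: "N = 4 * m" by (auto elim: dvdE)
    have "m \<le> 12" "1 \<le> m" "m \<noteq> 5" using m assms \<open>N \<noteq> 20\<close> by auto
    then have "m \<in> {1,2,3,4,6,7,8,9,10,11,12}" by simp presburger
    then show ?thesis using m by auto
  qed
next
  assume "N \<in> {1,4,8,12,16,24,28,32,36,40,44,48}"
  then show "PCS_exists 3 N"
    using ex1 ex4 ex8 ex12 ex16 ex24 ex28 ex32 ex36 ex40 ex44 ex48 by auto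
qed

end
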